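(* Let $\alpha,\beta,\gamma,x$ be real numbers, $\lambda$ a nonnegative integer and $n$ a nonnegative integer. Then $$xA_{n}^{\lambda+1,x}(\alpha,\beta,\gamma+\beta)=(x+1)A_{n}^{\lambda+1,x}(\alpha,\beta,\gamma)-A_{n}^{\lambda,x}(\alpha,\beta,\gamma)$$ and $$A_{n+1}^{\lambda,x}(\alpha,\beta,\gamma-\alpha)-(x+1)\lambda\beta\, A_{n}^{\lambda+1,x}(\alpha,\beta,\gamma)=(\gamma-\alpha-\lambda\beta)A_{n}^{\lambda,x}(\alpha,\beta,\gamma).$$
   Context: For a number $t$ and $\alpha$, the generalised factorial is $(t|\alpha)_n=\prod_{j=0}^{n-1}(t-j\alpha)$ for $n\ge 1$ and $(t|\alpha)_0=1$. For parameters $\alpha,\beta,\gamma$, the generalised Stirling numbers $S(n,k,\alpha,\beta,\gamma)$ ($0\le k\le n$) are defined by the polynomial identity $(t|\alpha)_n=\sum_{k=0}^{n}S(n,k,\alpha,\beta,\gamma)\,(t-\gamma|\beta)_k$ in the variable $t$. For a nonnegative integer $\lambda$ put $\binom{k+\lambda-1}{k}=\lambda(\lambda+1)\cdots(\lambda+k-1)/k!$ (equal to $1$ for $k=0$). Define $$A^{\lambda,x}_n(\alpha,\beta,\gamma)=\sum_{k=0}^{n}\binom{k+\lambda-1}{k}(-1)^{n+k}\beta^k k!\,S(n,k,\alpha,-\beta,-\gamma)\,x^k .$$ (For $\alpha\neq0$ these have exponential generating function $\sum_n A^{\lambda,x}_n(\alpha,\beta,\gamma)t^n/n!=(1-\alpha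 t)^{-\gamma/\alpha}\big(1-x[(1-\alpha t)^{-\beta/\alpha}-1]\big)^{-\lambda}$.) *)

theory Defs
  imports Complex_Main
begin

definition gfact :: "real \<Rightarrow> real \<Rightarrow> nat \<Rightarrow> real" where
  "gfact t \<alpha> n = (\<Prod>j<n. t - real j * \<alpha>)"

text \<open>The coefficient family is extended by 0 for k > n so that it is unique.\<close>
definition gstirling :: "nat \<Rightarrow> nat \<Rightarrow> real \<Rightarrow> real \<Rightarrow> real \<Rightarrow> real" where
  "gstirling n k \<alpha> \<beta> \<gamma> =
     (THE c :: nat \<Rightarrow> real. (\<forall>i>n. c i = 0) \<and>
        (\<forall>t::real. gfact t \<alpha> n = (\<Sum>i=0..n. c i * gfact (t - \<gamma>) \<beta> i))) k"

text \<open>binom(k+lambda-1, k) = lambda(lambda+1)...(lambda+k-1)/k!\<close>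
definition multichoose :: "nat \<Rightarrow> nat \<Rightarrow> real" where
  "multichoose l k = pochhammer (real l) k / fact k"

definition A :: "nat \<Rightarrow> nat \<Rightarrow> real \<Rightarrow> real \<Rightarrow> real \<Rightarrow> real \<Rightarrow> real" where
  "A n l x \<alpha> \<beta> \<gamma> =
     (\<Sum>k=0..n. multichoose l k * (-1) ^ (n + k) * \<beta> ^ k * fact k
                * gstirling n k \<alpha> (-\<beta>) (-\<gamma>) * x ^ k)"

end

theory Submission
  imports Defs "HOL-Computational_Algebra.Polynomial"
begin

fun stir :: "real \<Rightarrow> real \<Rightarrow> real \<Rightarrow> nat \<Rightarrow> nat \<Rightarrow> real" where
  "stir a b g 0 k = (if k = 0 then 1 else 0)"
| "stir a b g (Suc n) 0 = (g - real n * a) * stir a b g n 0"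
| "stir a b g (Suc n) (Suc k) = stir a b g n k + (g + real (Suc k) * b - real n * a) * stir a b g n (Suc k)"

lemma stir_Suc: "stir a b g (Suc n) i = (if i = 0 then 0 else stir a b g n (i - 1))
   + (g + real i * b - real n * a) * stir a b g n i"
  by (cases i) auto

lemma stir_zero: "n < k \<Longrightarrow> stir a b g n k = 0"
proof (induction n arbitrary: k)
  case 0 then show ?case by simp
next
  case (Suc n)
  then obtain j where "k = Suc j" by (cases k) auto
  with Suc show ?case by simp
qed

lemma gfact_Suc: "gfact t a (Suc n) = gfact t a n * (t - real n * a)"
  by (simp add: gfact_def)

lemma stir_expand: "n < N \<Longrightarrow> gfact t a n = (\<Sum>i<N. stir a b g n i * gfact (t - g) b i)"
proof (induction n arbitrary: N)
  case 0
  then obtain M where N: "N = Suc M" by (cases N) auto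
  show ?case unfolding N sum.lessThan_Suc_shift by (simp add: gfact_def)
next
  case (Suc n)
  then obtain M where N: "N = Suc M" and nM: "n < M" by (cases N) auto
  have IH: "gfact t a n = (\<Sum>i<M. stir a b g n i * gfact (t - g) b i)" using Suc.IH nM .
  have z: "stir a b g n M = 0" using nM stir_zero by simp
  have "(\<Sum>i<N. stir a b g (Suc n) i * gfact (t - g) b i)
     = (\<Sum>i<N. (if i = 0 then 0 else stir a b g n (i - 1)) * gfact (t - g) b i)
       + (\<Sum>i<N. (g + real i * b - real n * a) * stir a b g n i * gfact (t - g) b i)"
    by (subst sum.distrib[symmetric]) (rule sum.cong, simp_all add: stir_Suc algebra_simps)
  also have "(\<Sum>i<N. (if i = 0 then 0 else stir a b g n (i - 1)) * gfact (t - g) b i)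
      = (\<Sum>i<M. stir a b g n i * gfact (t - g) b i * (t - g - real i * b))"
    unfolding N sum.lessThan_Suc_shift by (auto simp: gfact_Suc mult_ac intro!: sum.cong)
  also have "(\<Sum>i<N. (g + real i * b - real n * a) * stir a b g n i * gfact (t - g) b i)
      = (\<Sum>i<M. (g + real i * b - real n * a) * stir a b g n i * gfact (t - g) b i)"
    unfolding N by (simp add: z)
  also have "(\<Sum>i<M. stir a b g n i * gfact (t - g) b i * (t - g - real i * b))
     + (\<Sum>i<M. (g + real i * b - real n * a) * stir a b g n i * gfact (t - g) b i)
     = (\<Sum>i<M. stir a b g n i * gfact (t - g) b i * (t - real n * a))"
    by (simp only: sum.distrib[symmetric]) (rule sum.cong, simp_all add: algebra_simps)
  also have "\<dots> = (\<Sum>i<M. stir a b g n i * gfact (t - g) b i) * (t - real n * a)"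
    by (simp add: sum_distrib_right)
  finally show ?case by (simp add: IH gfact_Suc)
qed

definition bp :: "real \<Rightarrow> real \<Rightarrow> nat \<Rightarrow> real poly" where
  "bp g b i = (\<Prod>j<i. [:-(g + real j * b), 1:])"

lemma bp_poly: "poly (bp g b i) t = gfact (t - g) b i"
  by (simp add: bp_def gfact_def poly_prod algebra_simps)

lemma bp_monic: "degree (bp g b i) = i \<and> coeff (bp g b i) i = 1"
proof (induction i)
  case 0 then show ?case by (simp add: bp_def)
next
  case (Suc i)
  have eq: "bp g b (Suc i) = bp g b i * [:-(g + real i * b), 1:]" by (simp add: bp_def)
  have nz: "bp g b i \<noteq> 0" using Suc by auto
  have d: "degree (bp g b (Suc i)) = Suc i" unfolding eq
    by (subst degree_mult_eq) (use nz Suc in auto)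
  have "coeff (bp g b (Suc i)) (Suc i) = 1" unfolding eq
    using coeff_mult_degree_sum[of "bp g b i" "[:-(g + real i * b), 1:]"] Suc by simp
  with d show ?case by simp
qed

lemma basis_indep:
  assumes "\<forall>t. (\<Sum>i<N. e i * gfact (t - g) b i) = 0"
  shows "\<forall>i<N. e i = 0"
  using assms
proof (induction N)
  case 0 then show ?case by simp
next
  case (Suc N)
  define p where "p = (\<Sum>i<Suc N. smult (e i) (bp g b i))"
  have "\<forall>t. poly p t = 0" using Suc.prems by (simp add: p_def poly_sum bp_poly)
  then have p0: "p = 0" using poly_all_0_iff_0 by blast
  have "coeff p N = (\<Sum>i<Suc N. e i * coeff (bp g b i) N)" by (simp add: p_def coeff_sum)
  also have "\<dots> = e N"
  proof -
    have "\<forall>i<N. coeff (bp g b i) N = 0"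
    proof (intro allI impI)
      fix i assume "i < N"
      then have "degree (bp g b i) < N" using bp_monic by simp
      then show "coeff (bp g b i) N = 0" by (rule coeff_eq_0)
    qed
    then show ?thesis using bp_monic[of g b N] by simp
  qed
  finally have eN: "e N = 0" using p0 by simp
  then have "\<forall>t. (\<Sum>i<N. e i * gfact (t - g) b i) = 0" using Suc.prems by simp
  then have "\<forall>i<N. e i = 0" by (rule Suc.IH)
  with eN show ?case using less_Suc_eq by auto
qed

lemma gstirling_eq: "gstirling n k a b g = stir a b g n k"
proof -
  have "(THE c :: nat \<Rightarrow> real. (\<forall>i>n. c i = 0) \<and>
        (\<forall>t::real. gfact t a n = (\<Sum>i=0..n. c i * gfact (t - g) b i))) = stir a b g n"
  proof (rule the_equality)
    show "(\<forall>i>n. stir a b g n i = 0) \<and> (\<forall>t. gfact t a n = (\<Sum>i = 0..n. stir a b g n i * gfact (t - g) b i))"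
      using stir_zero stir_expand[of n "Suc n"] by (auto simp: atLeast0AtMost lessThan_Suc_atMost)
  next
    fix c assume c: "(\<forall>i>n. c i = 0) \<and> (\<forall>t. gfact t a n = (\<Sum>i = 0..n. c i * gfact (t - g) b i))"
    have "\<forall>t. (\<Sum>i<Suc n. (c i - stir a b g n i) * gfact (t - g) b i) = 0"
    proof
      fix t
      have "gfact t a n = (\<Sum>i<Suc n. c i * gfact (t - g) b i)"
        using c by (simp add: atLeast0AtMost lessThan_Suc_atMost)
      moreover have "gfact t a n = (\<Sum>i<Suc n. stir a b g n i * gfact (t - g) b i)"
        using stir_expand[of n "Suc n" t a b g] by simp
      ultimately show "(\<Sum>i<Suc n. (c i - stir a b g n i) * gfact (t - g) b i) = 0"
        by (simp add: algebra_simps sum_subtractf)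
    qed
    then have "\<forall>i<Suc n. c i - stir a b g n i = 0" by (rule basis_indep)
    then show "c = stir a b g n"
    proof -
      assume h: "\<forall>i<Suc n. c i - stir a b g n i = 0"
      show ?thesis
      proof
        fix i show "c i = stir a b g n i"
        proof (cases "i \<le> n")
          case True then show ?thesis using h by auto
        next
          case False then show ?thesis using c stir_zero[of n i] by auto
        qed
      qed
    qed
  qed
  then show ?thesis unfolding gstirling_def by simp
qed


definition D :: "real \<Rightarrow> real \<Rightarrow> real \<Rightarrow> nat \<Rightarrow> nat \<Rightarrow> real" where
  "D a b g n k = (-1) ^ (n + k) * b ^ k * fact k * stir a (-b) (-g) n k"

lemma D_0: "D a b g 0 k = (if k = 0 then 1 else 0)"
  by (simp add: D_def)

lemma D_Suc: "D a b g (Suc n) k = real k * b * D a b g n (k - 1) + (g + real k * b + real n * a) * D a b g n k"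
proof (cases k)
  case 0 then show ?thesis by (simp add: D_def algebra_simps)
next
  case (Suc j)
  then show ?thesis by (simp add: D_def algebra_simps)
qed

lemma D_zero: "n < k \<Longrightarrow> D a b g n k = 0"
  by (simp add: D_def stir_zero)

lemma A_eq:
  assumes "n < N"
  shows "A n l x a b g = (\<Sum>k<N. multichoose l k * D a b g n k * x ^ k)"
proof -
  have "A n l x a b g = (\<Sum>k<Suc n. multichoose l k * D a b g n k * x ^ k)"
    unfolding A_def gstirling_eq D_def atLeast0AtMost lessThan_Suc_atMost[symmetric]
    by (rule sum.cong) (simp_all add: algebra_simps)
  also have "\<dots> = (\<Sum>k<N. multichoose l k * D a b g n k * x ^ k)"
    by (rule sum.mono_neutral_cong_left) (use assms D_zero in auto)
  finally show ?thesis .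
qed

lemma D_shift: "D a b (g + b) n k = D a b g n k + D a b g n (Suc k)"
proof (induction n arbitrary: k)
  case 0 then show ?case by (simp add: D_0)
next
  case (Suc n)
  have e: "D a b (g + b) (Suc n) k = real k * b * D a b (g + b) n (k - 1)
      + (g + b + real k * b + real n * a) * D a b (g + b) n k"
    by (rule D_Suc)
  show ?case
  proof (cases k)
    case 0 then show ?thesis unfolding e Suc.IH by (simp add: D_Suc algebra_simps)
  next
    case (Suc j) then show ?thesis unfolding e Suc.IH by (simp add: D_Suc algebra_simps)
  qed
qed

lemma D_shift2: "D a b (g - a) (Suc n) k = real k * b * D a b g n (k - 1) + (g - a + real k * b) * D a b g n k"
proof (induction n arbitrary: k)
  case 0 then show ?case by (simp add: D_Suc D_0)
next
  case (Suc n)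
  have e: "D a b (g - a) (Suc (Suc n)) k = real k * b * D a b (g - a) (Suc n) (k - 1)
      + (g - a + real k * b + real (Suc n) * a) * D a b (g - a) (Suc n) k"
    by (rule D_Suc)
  show ?case
  proof (cases k)
    case 0 then show ?thesis unfolding e Suc.IH by (simp add: D_Suc algebra_simps)
  next
    case (Suc j)
    show ?thesis
    proof (cases j)
      case 0 then show ?thesis unfolding e Suc.IH using \<open>k = Suc j\<close> by (simp add: D_Suc algebra_simps)
    next
      case (Suc i) then show ?thesis unfolding e Suc.IH using \<open>k = Suc j\<close> by (simp add: D_Suc algebra_simps)
    qed
  qed
qed

lemma mc0: "multichoose l 0 = 1"
  by (simp add: multichoose_def)

lemma poch_h1: "pochhammer (real (l + 1)) (Suc k) = (real l + 1 + real k) * pochhammer (real l + 1) k"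
  by (simp add: pochhammer_rec' add.commute)

lemma poch_h2: "pochhammer (real l) (Suc k) = real l * pochhammer (real l + 1) k"
  by (simp add: pochhammer_rec)

lemma fact_pos': "(fact k :: real) > 0" by simp

lemma mc1: "multichoose (l + 1) (Suc k) - multichoose l (Suc k) = multichoose (l + 1) k"
proof -
  have f: "(fact (Suc k) :: real) = real (Suc k) * fact k" by simp
  have aux: "\<And>c F P. c = real k + 1 \<Longrightarrow> (F::real) > 0 \<Longrightarrow>
     (real l + 1 + real k) * P / (c * F) - real l * P / (c * F) = P / F"
  proof -
    fix c F P :: real assume c: "c = real k + 1" and F: "F > 0"
    have "(real l + 1 + real k) * P / (c * F) - real l * P / (c * F)
        = ((real l + 1 + real k) * P - real l * P) / (c * F)" by (simp add: diff_divide_distrib)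
    also have "\<dots> = c * P / (c * F)" using c by (simp add: algebra_simps)
    also have "\<dots> = P / F" using c F by simp
    finally show "(real l + 1 + real k) * P / (c * F) - real l * P / (c * F) = P / F" .
  qed
  show ?thesis unfolding multichoose_def poch_h1[of l k] poch_h2[of l k] f unfolding of_nat_add of_nat_1
    by (rule aux) simp_all
qed

lemma mc2: "multichoose l (Suc k) * real (Suc k) = real l * multichoose (l + 1) k"
proof -
  have f: "(fact (Suc k) :: real) = real (Suc k) * fact k" by simp
  have aux: "\<And>c F P. c > 0 \<Longrightarrow> (F::real) > 0 \<Longrightarrow> real l * P / (c * F) * c = real l * (P / F)"
    by (simp add: field_simps)
  show ?thesis unfolding multichoose_def poch_h2 f of_nat_add of_nat_1
    by (rule aux) simp_all
qed

lemma mc3: "(real k + real l) * multichoose l k = real l * multichoose (l + 1) k"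
proof (cases k)
  case 0 then show ?thesis by (simp add: multichoose_def)
next
  case (Suc j)
  have "(real k + real l) * pochhammer (real l) k = real l * pochhammer (real (l + 1)) k"
    unfolding Suc poch_h1[of l j] poch_h2[of l j] by (simp add: algebra_simps)
  then show ?thesis unfolding multichoose_def by (simp add: field_simps)
qed

lemma part1:
  fixes a b g x :: real and l n :: nat
  shows "x * A n (l + 1) x a b (g + b) = (x + 1) * A n (l + 1) x a b g - A n l x a b g"
proof -
  define M where "M = Suc n"
  define N where "N = Suc M"
  have nN: "n < N" and nM: "n < M" by (simp_all add: M_def N_def)
  let ?d = "D a b g n"
  have L: "x * A n (l + 1) x a b (g + b) =
     (\<Sum>k<N. multichoose (l + 1) k * ?d k * x ^ Suc k) + (\<Sum>k<N. multichoose (l + 1) k * ?d (Suc k) * x ^ Suc k)"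
    unfolding A_eq[OF nN] D_shift
    by (simp add: sum_distrib_left sum.distrib[symmetric] algebra_simps)
  have R: "(x + 1) * A n (l + 1) x a b g - A n l x a b g =
     (\<Sum>k<N. multichoose (l + 1) k * ?d k * x ^ Suc k) + (\<Sum>k<N. (multichoose (l + 1) k - multichoose l k) * ?d k * x ^ k)"
    unfolding A_eq[OF nN]
    by (simp add: sum_distrib_left sum.distrib[symmetric] sum_subtractf[symmetric] algebra_simps)
  have S: "(\<Sum>k<N. (multichoose (l + 1) k - multichoose l k) * ?d k * x ^ k)
     = (\<Sum>k<M. multichoose (l + 1) k * ?d (Suc k) * x ^ Suc k)"
    unfolding N_def sum.lessThan_Suc_shift using mc1 by (simp add: mc0)
  have T: "(\<Sum>k<N. multichoose (l + 1) k * ?d (Suc k) * x ^ Suc k)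
     = (\<Sum>k<M. multichoose (l + 1) k * ?d (Suc k) * x ^ Suc k)"
    unfolding N_def by (simp add: D_zero M_def)
  show ?thesis using L R S T by simp
qed

lemma part2:
  fixes a b g x :: real and l n :: nat
  shows "A (n + 1) l x a b (g - a) - (x + 1) * real l * b * A n (l + 1) x a b g
           = (g - a - real l * b) * A n l x a b g"
proof -
  define M where "M = Suc n"
  define N where "N = Suc M"
  have nN: "n < N" and nM: "n < M" and nN': "n + 1 < N" by (simp_all add: M_def N_def)
  let ?d = "D a b g n"
  have E: "A (n + 1) l x a b (g - a) =
      (\<Sum>k<N. multichoose l k * (real k * b * ?d (k - 1)) * x ^ k)
    + (\<Sum>k<N. multichoose l k * (g - a + real k * b) * ?d k * x ^ k)"
    unfolding A_eq[OF nN'] unfolding Suc_eq_plus1[symmetric] D_shift2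
    by (simp add: sum.distrib[symmetric] algebra_simps)
  have F1: "(\<Sum>k<N. multichoose l k * (real k * b * ?d (k - 1)) * x ^ k)
      = (\<Sum>k<M. multichoose l (Suc k) * real (Suc k) * b * ?d k * x ^ Suc k)"
    unfolding N_def sum.lessThan_Suc_shift by (simp add: algebra_simps)
  also have "\<dots> = x * real l * b * (\<Sum>k<M. multichoose (l + 1) k * ?d k * x ^ k)"
  proof -
    have h: "multichoose l (Suc k) * real (Suc k) * b * ?d k * x ^ Suc k
        = x * real l * b * (multichoose (l + 1) k * ?d k * x ^ k)" for k
    proof -
      have "multichoose l (Suc k) * real (Suc k) * b * ?d k * x ^ Suc k
          = (multichoose l (Suc k) * real (Suc k)) * (b * ?d k * x ^ Suc k)" by (simp only: mult.assoc)
      also have "\<dots> = (real l * multichoose (l + 1) k) * (b * ?d k * x ^ Suc k)" by (simp only: mc2)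
      also have "\<dots> = x * real l * b * (multichoose (l + 1) k * ?d k * x ^ k)" by (simp add: algebra_simps)
      finally show ?thesis .
    qed
    show ?thesis by (simp only: h sum_distrib_left)
  qed
  also have "\<dots> = x * real l * b * A n (l + 1) x a b g"
    by (simp add: A_eq[OF nM])
  finally have F1': "(\<Sum>k<N. multichoose l k * (real k * b * ?d (k - 1)) * x ^ k)
      = x * real l * b * A n (l + 1) x a b g" .
  have F2: "(\<Sum>k<N. multichoose l k * (g - a + real k * b) * ?d k * x ^ k)
      = (g - a - real l * b) * A n l x a b g + real l * b * A n (l + 1) x a b g"
  proof -
    have h: "multichoose l k * (g - a + real k * b) * ?d k * x ^ k
       = (g - a - real l * b) * (multichoose l k * ?d k * x ^ k)
         + real l * b * (multichoose (l + 1) k * ?d k * x ^ k)" for k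
    proof -
      have m: "(real k + real l) * multichoose l k = real l * multichoose (l + 1) k" by (rule mc3)
      have "multichoose l k * (g - a + real k * b) * ?d k * x ^ k
         = (g - a - real l * b) * (multichoose l k * ?d k * x ^ k)
           + b * ((real k + real l) * multichoose l k) * (?d k * x ^ k)" by (simp add: algebra_simps)
      also have "\<dots> = (g - a - real l * b) * (multichoose l k * ?d k * x ^ k)
         + real l * b * (multichoose (l + 1) k * ?d k * x ^ k)" unfolding m by (simp add: algebra_simps)
      finally show ?thesis .
    qed
    show ?thesis by (simp only: h sum.distrib sum_distrib_left A_eq[OF nN])
  qed
  show ?thesis unfolding E F1' F2 by (simp add: algebra_simps)
qed

theorem theorem8:
  fixes \<alpha> \<beta> \<gamma> x :: real and l n :: nat
  shows "(x * A n (l + 1) x \<alpha> \<beta> (\<gamma> + \<beta>)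
           = (x + 1) * A n (l + 1) x \<alpha> \<beta> \<gamma> - A n l x \<alpha> \<beta> \<gamma>) \<and>
         (A (n + 1) l x \<alpha> \<beta> (\<gamma> - \<alpha>) - (x + 1) * real l * \<beta> * A n (l + 1) x \<alpha> \<beta> \<gamma>
           = (\<gamma> - \<alpha> - real l * \<beta>) * A n l x \<alpha> \<beta> \<gamma>)"
  using part1 part2 by blast

end
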